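(* In the one-shot wage theft problem described in the context, for any effort level $a\in[0,1)$, the problem restricted to effort level $a$ has an optimal solution whose promised wages are $w_L^*(a)=\max\{0,\;u-aC'(a)+C(a)\}$ and $w_H^*(a)=w_L^*(a)+C'(a)=\max\{C'(a),\;u+(1-a)C'(a)+C(a)\}$. Further, if $a\in(0,1)$, then every optimal solution of the problem restricted to effort level $a$ has promised wages $w_L^*(a)$ and $w_H^*(a)$.
   Context: Fix $P>0$, $y_H>y_L\ge 0$, a real number $u$ (reservation utility) and $\gamma\in(0,1]$ (inspection probability). Let $C:[0,1)\to\mathbb{R}$ be the worker's effort cost: $C(0)=0$, $C$ increasing, strictly convex, twice differentiable, $C(a)\to\infty$ as $a\to1$. Let $\eta:[0,\infty)\to\mathbb{R}$ be the penalty: strictly convex, increasing, twice differentiable, $\eta(0)=0$. The one-shot wage theft problem is: choose $a,w_H,w_L,b_H,b_L$ to maximize the employer profit $a\,(Py_H-w_H+b_H-\gamma\eta(b_H))+(1-a)\,(Py_L-w_L+b_L-\gamma\eta(b_L))$ subject to (incentive compatibility) $a\in\arg\max_{a'\in[0,1)}\{a'w_H+(1-a')w_L-C(a')\}$; (individual rationality) $a w_H+(1-a)w_L-C(a)\ge u$; $w_H,w_L\ge 0$; $0\le b_L\le w_L$, $0\le b_H\le w_H$; $a\in[0,1)$. The problem restricted to effort level $a$ is the same problem with $a$ fixed. The principal's ideal wage theft $\beta\ge0$ is the value with $\gamma\eta'(\beta)=1$ (assumed to exist). *)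

theory Defs
  imports "HOL-Analysis.Analysis"
begin

definition strictly_convex_on :: "real set \<Rightarrow> (real \<Rightarrow> real) \<Rightarrow> bool" where
  "strictly_convex_on S f \<longleftrightarrow> convex S \<and>
     (\<forall>x\<in>S. \<forall>y\<in>S. \<forall>t. x \<noteq> y \<and> 0 < t \<and> t < 1 \<longrightarrow>
        f ((1 - t) * x + t * y) < (1 - t) * f x + t * f y)"

definition worker_payoff :: "(real \<Rightarrow> real) \<Rightarrow> real \<Rightarrow> real \<Rightarrow> real \<Rightarrow> real" where
  "worker_payoff C wH wL a' = a' * wH + (1 - a') * wL - C a'"

definition incentive_compatible :: "(real \<Rightarrow> real) \<Rightarrow> real \<Rightarrow> real \<Rightarrow> real \<Rightarrow> bool" where
  "incentive_compatible C a wH wL \<longleftrightarrow>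
     a \<in> {0..<1} \<and> (\<forall>a'\<in>{0..<1}. worker_payoff C wH wL a' \<le> worker_payoff C wH wL a)"

definition feasible :: "(real \<Rightarrow> real) \<Rightarrow> real \<Rightarrow> real \<Rightarrow> real \<Rightarrow> real \<Rightarrow> real \<Rightarrow> real \<Rightarrow> bool" where
  "feasible C u a wH wL bH bL \<longleftrightarrow>
     a \<in> {0..<1} \<and>
     incentive_compatible C a wH wL \<and>
     worker_payoff C wH wL a \<ge> u \<and>
     wH \<ge> 0 \<and> wL \<ge> 0 \<and>
     0 \<le> bL \<and> bL \<le> wL \<and> 0 \<le> bH \<and> bH \<le> wH"

definition profit :: "real \<Rightarrow> real \<Rightarrow> real \<Rightarrow> real \<Rightarrow> (real \<Rightarrow> real) \<Rightarrow>
    real \<Rightarrow> real \<Rightarrow> real \<Rightarrow> real \<Rightarrow> real \<Rightarrow> real" where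
  "profit P yH yL \<gamma> \<eta> a wH wL bH bL =
     a * (P * yH - wH + bH - \<gamma> * \<eta> bH) + (1 - a) * (P * yL - wL + bL - \<gamma> * \<eta> bL)"

definition optimal_at :: "real \<Rightarrow> real \<Rightarrow> real \<Rightarrow> real \<Rightarrow> (real \<Rightarrow> real) \<Rightarrow> (real \<Rightarrow> real) \<Rightarrow> real \<Rightarrow>
    real \<Rightarrow> real \<Rightarrow> real \<Rightarrow> real \<Rightarrow> real \<Rightarrow> bool" where
  "optimal_at P yH yL \<gamma> \<eta> C u a wH wL bH bL \<longleftrightarrow>
     feasible C u a wH wL bH bL \<and>
     (\<forall>wH' wL' bH' bL'. feasible C u a wH' wL' bH' bL' \<longrightarrow>
        profit P yH yL \<gamma> \<eta> a wH' wL' bH' bL' \<le> profit P yH yL \<gamma> \<eta> a wH wL bH bL)"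

end

theory Submission
  imports Defs
begin

lemma nontriv: fixes c x :: real assumes "c < x" shows "at c within {c<..x} \<noteq> bot"
  using assms by (simp add: at_within_eq_bot_iff)

lemma deriv_le_slope:
  fixes f :: "real \<Rightarrow> real"
  assumes d: "(f has_real_derivative D) (at c within S)" and sub: "{c<..x} \<subseteq> S" and cx: "c < x"
    and b: "\<And>y. c < y \<Longrightarrow> y \<le> x \<Longrightarrow> (f y - f c) / (y - c) \<le> B"
  shows "D \<le> B"
proof -
  have "(f has_real_derivative D) (at c within {c<..x})" using d sub by (rule DERIV_subset)
  hence t: "((\<lambda>y. (f y - f c) / (y - c)) \<longlongrightarrow> D) (at c within {c<..x})"
    by (simp add: has_field_derivative_iff)
  have ev: "eventually (\<lambda>y. (f y - f c) / (y - c) \<le> B) (at c within {c<..x})"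
    using b by (auto simp: eventually_at_filter)
  show ?thesis using tendsto_upperbound[OF t ev nontriv[OF cx]] .
qed

lemma deriv_ge_slope:
  fixes f :: "real \<Rightarrow> real"
  assumes d: "(f has_real_derivative D) (at c within S)" and sub: "{c<..x} \<subseteq> S" and cx: "c < x"
    and b: "\<And>y. c < y \<Longrightarrow> y \<le> x \<Longrightarrow> (f y - f c) / (y - c) \<ge> B"
  shows "D \<ge> B"
proof -
  have "(f has_real_derivative D) (at c within {c<..x})" using d sub by (rule DERIV_subset)
  hence t: "((\<lambda>y. (f y - f c) / (y - c)) \<longlongrightarrow> D) (at c within {c<..x})"
    by (simp add: has_field_derivative_iff)
  have ev: "eventually (\<lambda>y. (f y - f c) / (y - c) \<ge> B) (at c within {c<..x})"
    using b by (auto simp: eventually_at_filter)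
  show ?thesis using tendsto_lowerbound[OF t ev nontriv[OF cx]] .
qed

lemma sconv_convex_on: "strictly_convex_on S f \<Longrightarrow> convex_on S f"
  unfolding strictly_convex_on_def
  apply (rule convex_on_linorderI)
  apply (auto simp: less_imp_le)
  done

lemma sconv_mono_strict:
  fixes f :: "real \<Rightarrow> real"
  assumes m: "mono_on S f" and sc: "strictly_convex_on S f" and x: "x \<in> S" "y \<in> S" "x < y"
  shows "f x < f y"
proof (rule ccontr)
  assume "\<not> f x < f y"
  moreover have "f x \<le> f y" using m x by (simp add: mono_on_def)
  ultimately have eq: "f x = f y" by simp
  let ?z = "(1 - 1/2) * x + (1/2) * y"
  have cs: "convex S" using sc by (simp add: strictly_convex_on_def)
  have zS: "?z \<in> S" using convexD[OF cs x(1) x(2), of "1/2" "1/2"] by simp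
  have "f ?z < (1 - 1/2) * f x + (1/2) * f y"
  proof -
    have "\<forall>x\<in>S. \<forall>y\<in>S. \<forall>t. x \<noteq> y \<and> 0 < t \<and> t < 1 \<longrightarrow>
        f ((1 - t) * x + t * y) < (1 - t) * f x + t * f y" using sc by (simp add: strictly_convex_on_def)
    then have "x \<noteq> y \<and> 0 < (1/2::real) \<and> (1/2::real) < 1 \<longrightarrow>
        f ((1 - 1/2) * x + 1/2 * y) < (1 - 1/2) * f x + 1/2 * f y" using x by blast
    then show ?thesis using x by simp
  qed
  hence "f ?z < f x" using eq by simp
  moreover have "f x \<le> f ?z" using m x zS by (auto simp: mono_on_def)
  ultimately show False by simp
qed

lemma key:
  fixes \<eta> :: "real \<Rightarrow> real"
  assumes smono: "\<And>x y. 0 \<le> x \<Longrightarrow> x < y \<Longrightarrow> \<eta> x < \<eta> y" and g: "\<gamma> > 0"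
    and "0 \<le> w0" "w0 \<le> w" "0 \<le> b" "b \<le> w"
  shows "-w + b - \<gamma> * \<eta> b \<le> -w0 + min b w0 - \<gamma> * \<eta> (min b w0)"
    and "w0 < w \<Longrightarrow> -w + b - \<gamma> * \<eta> b < -w0 + min b w0 - \<gamma> * \<eta> (min b w0)"
proof -
  show "w0 < w \<Longrightarrow> -w + b - \<gamma> * \<eta> b < -w0 + min b w0 - \<gamma> * \<eta> (min b w0)"
  proof (cases "b \<le> w0")
    case False
    hence "\<eta> w0 < \<eta> b" using smono assms by simp
    hence "\<gamma> * \<eta> w0 < \<gamma> * \<eta> b" using g by simp
    moreover have "min b w0 = w0" using False by simp
    ultimately show ?thesis using False assms by linarith
  qed simp
  show "-w + b - \<gamma> * \<eta> b \<le> -w0 + min b w0 - \<gamma> * \<eta> (min b w0)"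
  proof (cases "b \<le> w0")
    case False
    hence "\<eta> w0 < \<eta> b" using smono assms by simp
    hence "\<gamma> * \<eta> w0 < \<gamma> * \<eta> b" using g by simp
    moreover have "min b w0 = w0" using False by simp
    ultimately show ?thesis using False assms by linarith
  qed (use assms in simp)
qed

lemma chord_slope:
  fixes f :: "real \<Rightarrow> real"
  assumes cv: "convex_on S f" and c: "c \<in> S" and x: "x \<in> S" and cy: "c < y" and yx: "y \<le> x"
  shows "(f y - f c) / (y - c) \<le> (f x - f c) / (x - c)"
proof -
  define t where "t = (y - c) / (x - c)"
  have t0: "0 \<le> t" "t \<le> 1" using cy yx by (auto simp: t_def divide_simps)
  have "t * (x - c) = y - c" using cy yx by (simp add: t_def)
  hence ye: "y = (1 - t) * c + t * x" by (simp add: algebra_simps)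
  have "f ((1 - t) *\<^sub>R c + t *\<^sub>R x) \<le> (1 - t) * f c + t * f x"
    using convex_onD[OF cv t0 c x] .
  hence "f y \<le> (1 - t) * f c + t * f x" using ye by simp
  hence "f y - f c \<le> t * (f x - f c)" by (simp add: algebra_simps)
  hence "(f y - f c) / (y - c) \<le> t * (f x - f c) / (y - c)" using cy by (simp add: divide_right_mono)
  also have "\<dots> = (f x - f c) / (x - c)"
  proof -
    have "y - c \<noteq> 0" "x - c \<noteq> 0" using cy yx by auto
    then show ?thesis by (simp add: t_def)
  qed
  finally show ?thesis .
qed

theorem proposition2:
  fixes P yH yL u \<gamma> :: real
    and C dC ddC :: "real \<Rightarrow> real"
    and \<eta> d\<eta> dd\<eta> :: "real \<Rightarrow> real"
    and a :: real
  assumes P_pos: "P > 0"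
    and y_order: "yH > yL" "yL \<ge> 0"
    and gamma: "0 < \<gamma>" "\<gamma> \<le> 1"
    and C0: "C 0 = 0"
    and C_mono: "mono_on {0..<1} C"
    and C_sconv: "strictly_convex_on {0..<1} C"
    and C_deriv: "\<And>x. x \<in> {0..<1} \<Longrightarrow> (C has_real_derivative dC x) (at x within {0..<1})"
    and C_deriv2: "\<And>x. x \<in> {0..<1} \<Longrightarrow> (dC has_real_derivative ddC x) (at x within {0..<1})"
    and C_infty: "filterlim C at_top (at_left 1)"
    and eta0: "\<eta> 0 = 0"
    and eta_mono: "mono_on {0..} \<eta>"
    and eta_sconv: "strictly_convex_on {0..} \<eta>"
    and eta_deriv: "\<And>x. x \<ge> 0 \<Longrightarrow> (\<eta> has_real_derivative d\<eta> x) (at x within {0..})"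
    and eta_deriv2: "\<And>x. x \<ge> 0 \<Longrightarrow> (d\<eta> has_real_derivative dd\<eta> x) (at x within {0..})"
    and beta_ex: "\<exists>\<beta>\<ge>0. \<gamma> * d\<eta> \<beta> = 1"
    and a_range: "a \<in> {0..<1}"
  shows "max 0 (u - a * dC a + C a) + dC a = max (dC a) (u + (1 - a) * dC a + C a)
     \<and> (\<exists>bH bL. optimal_at P yH yL \<gamma> \<eta> C u a
            (max 0 (u - a * dC a + C a) + dC a) (max 0 (u - a * dC a + C a)) bH bL)
     \<and> (0 < a \<longrightarrow>
          (\<forall>wH wL bH bL. optimal_at P yH yL \<gamma> \<eta> C u a wH wL bH bL \<longrightarrow>
             wL = max 0 (u - a * dC a + C a) \<and> wH = max 0 (u - a * dC a + C a) + dC a))"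
proof -
  have cvC: "convex_on {0..<1} C" using C_sconv by (rule sconv_convex_on)
  have a0: "0 \<le> a" and a1: "a < 1" using a_range by auto
  have dCnn: "dC a \<ge> 0"
  proof (rule deriv_ge_slope[OF C_deriv[OF a_range], of "(a+1)/2"])
    show "{a<..(a + 1) / 2} \<subseteq> {0..<1}" using a0 a1 by auto
    show "a < (a + 1) / 2" using a1 by simp
    fix y assume y: "a < y" "y \<le> (a + 1) / 2"
    have "C a \<le> C y" using C_mono a0 a1 y unfolding mono_on_def by auto
    then show "0 \<le> (C y - C a) / (y - a)" using y by simp
  qed
  have tang: "C x \<ge> C a + dC a * (x - a)" if x: "x \<in> {0..<1}" for x
  proof (cases "a > 0")
    case True
    have "C x - C a \<ge> dC a * (x - a)"
    proof (rule convex_on_imp_above_tangent[OF cvC])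
      show "connected {0..<(1::real)}" by (rule convex_connected) (rule convex_real_interval)
      show "a \<in> interior {0..<1}" using True a1 by simp
      show "x \<in> {0..<1}" by fact
      show "(C has_real_derivative dC a) (at a within {0..<1})" using C_deriv[OF a_range] .
    qed
    then show ?thesis by simp
  next
    case False
    hence az: "a = 0" using a0 by simp
    show ?thesis
    proof (cases "x = 0")
      case False
      hence xp: "0 < x" using x by auto
      have "dC 0 \<le> (C x - C 0) / (x - 0)"
      proof (rule deriv_le_slope[OF C_deriv[of 0], of x])
        show "0 \<in> {0..<(1::real)}" by simp
        show "{0<..x} \<subseteq> {0..<1}" using x by auto
        show "0 < x" by fact
        fix y assume "0 < y" "y \<le> x"
        then show "(C y - C 0) / (y - 0) \<le> (C x - C 0) / (x - 0)"
          using chord_slope[OF cvC, of 0 x y] x by simp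
      qed
      hence "dC 0 * x \<le> C x" using xp C0 by (simp add: field_simps)
      then show ?thesis using az C0 by simp
    qed (use az C0 in simp)
  qed
  have foc: "wH - wL = dC a" if ap: "0 < a" and ic: "incentive_compatible C a wH wL" for wH wL
  proof -
    let ?f = "\<lambda>y. wL + (wH - wL) * y - C y"
    have d1: "((\<lambda>y. (wH - wL) * y) has_real_derivative (wH - wL) * 1) (at a within {0..<1})"
      by (intro DERIV_cmult DERIV_ident)
    have "(?f has_real_derivative (0 + (wH - wL) * 1 - dC a)) (at a within {0..<1})"
      by (intro DERIV_diff DERIV_add DERIV_const d1 C_deriv[OF a_range])
    hence "(?f has_real_derivative (wH - wL - dC a)) (at a within {0..<1})" by simp
    hence "(?f has_real_derivative (wH - wL - dC a)) (at a within {0<..<1})"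
      by (rule DERIV_subset) auto
    hence d: "(?f has_real_derivative (wH - wL - dC a)) (at a)"
    proof -
      have "a \<in> {0<..<(1::real)}" using ap a1 by simp
      hence "at a within {0<..<(1::real)} = at a" by (intro at_within_open) auto
      with \<open>(?f has_real_derivative (wH - wL - dC a)) (at a within {0<..<1})\<close> show ?thesis by simp
    qed
    have "wH - wL - dC a = 0"
    proof (rule DERIV_local_max[OF d, of "min a (1 - a)"])
      show "0 < min a (1 - a)" using ap a1 by simp
      show "\<forall>y. \<bar>a - y\<bar> < min a (1 - a) \<longrightarrow> ?f y \<le> ?f a"
      proof (intro allI impI)
        fix y assume "\<bar>a - y\<bar> < min a (1 - a)"
        hence "y \<in> {0..<1}" by auto
        hence "worker_payoff C wH wL y \<le> worker_payoff C wH wL a"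
          using ic unfolding incentive_compatible_def by blast
        then show "?f y \<le> ?f a" unfolding worker_payoff_def by (simp add: algebra_simps)
      qed
    qed
    then show ?thesis by simp
  qed
  have smono: "\<eta> x < \<eta> y" if "0 \<le> x" "x < y" for x y
    using sconv_mono_strict[OF eta_mono eta_sconv] that by auto
  have etacont: "continuous_on {0..} \<eta>"
    using eta_deriv by (auto simp: continuous_on_eq_continuous_within intro: DERIV_continuous)
  have maxb: "\<exists>b\<in>{0..w}. \<forall>b'\<in>{0..w}. b' - \<gamma> * \<eta> b' \<le> b - \<gamma> * \<eta> b" if "0 \<le> w" for w
  proof (rule continuous_attains_sup)
    show "continuous_on {0..w} (\<lambda>b. b - \<gamma> * \<eta> b)"
      by (intro continuous_intros continuous_on_subset[OF etacont]) auto
  qed (use that in auto)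
  define WL where "WL = max 0 (u - a * dC a + C a)"
  define WH where "WH = WL + dC a"
  have WL0: "WL \<ge> 0" by (simp add: WL_def)
  have WH0: "WH \<ge> 0" using WL0 dCnn by (simp add: WH_def)
  obtain bL where bL: "bL \<in> {0..WL}" "\<And>b'. b' \<in> {0..WL} \<Longrightarrow> b' - \<gamma> * \<eta> b' \<le> bL - \<gamma> * \<eta> bL"
    using maxb[OF WL0] by blast
  obtain bH where bH: "bH \<in> {0..WH}" "\<And>b'. b' \<in> {0..WH} \<Longrightarrow> b' - \<gamma> * \<eta> b' \<le> bH - \<gamma> * \<eta> bH"
    using maxb[OF WH0] by blast
  have Fc: "feasible C u a WH WL bH bL"
    unfolding feasible_def incentive_compatible_def
  proof (intro conjI ballI)
    fix a' assume a': "a' \<in> {0..<(1::real)}"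
    show "worker_payoff C WH WL a' \<le> worker_payoff C WH WL a"
      using tang[OF a'] unfolding worker_payoff_def WH_def by (simp add: algebra_simps)
  next
    show "u \<le> worker_payoff C WH WL a"
      unfolding worker_payoff_def WH_def WL_def by (simp add: algebra_simps)
  qed (use a_range WL0 WH0 bL(1) bH(1) in auto)
  have lb: "WL \<le> wL \<and> (0 < a \<longrightarrow> wH = wL + dC a)" if f: "feasible C u a wH wL bH' bL'" for wH wL bH' bL'
  proof (cases "a > 0")
    case True
    have "incentive_compatible C a wH wL" using f unfolding feasible_def by blast
    hence e: "wH = wL + dC a" using foc[OF True] by force
    have "u \<le> a * wH + (1 - a) * wL - C a" using f unfolding feasible_def worker_payoff_def by simp
    hence "u - a * dC a + C a \<le> wL" using e by (simp add: algebra_simps)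
    then show ?thesis using f e unfolding feasible_def WL_def by simp
  next
    case False
    hence az: "a = 0" using a0 by simp
    have "u \<le> wL" using f az C0 unfolding feasible_def worker_payoff_def by simp
    then show ?thesis using f az C0 unfolding feasible_def WL_def by simp
  qed
  have bound: "profit P yH yL \<gamma> \<eta> a wH wL bH' bL' \<le> profit P yH yL \<gamma> \<eta> a WH WL bH bL
      \<and> (WL < wL \<longrightarrow> profit P yH yL \<gamma> \<eta> a wH wL bH' bL' < profit P yH yL \<gamma> \<eta> a WH WL bH bL)"
    if f: "feasible C u a wH wL bH' bL'" for wH wL bH' bL'
  proof -
    have l: "WL \<le> wL" "0 < a \<longrightarrow> wH = wL + dC a" using lb[OF f] by auto
    have bL': "0 \<le> bL'" "bL' \<le> wL" using f unfolding feasible_def by auto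
    have bH': "0 \<le> bH'" "bH' \<le> wH" using f unfolding feasible_def by auto
    have mL: "min bL' WL \<in> {0..WL}" using bL' WL0 by auto
    have XL: "-wL + bL' - \<gamma> * \<eta> bL' \<le> -WL + bL - \<gamma> * \<eta> bL"
      using key(1)[where \<eta>=\<eta>, OF smono gamma(1) WL0 l(1) bL'] bL(2)[OF mL] by linarith
    have XLs: "WL < wL \<longrightarrow> -wL + bL' - \<gamma> * \<eta> bL' < -WL + bL - \<gamma> * \<eta> bL"
      using key(2)[where \<eta>=\<eta>, OF smono gamma(1) WL0 l(1) bL'] bL(2)[OF mL] by linarith
    have XH: "a * (P * yH - wH + bH' - \<gamma> * \<eta> bH') \<le> a * (P * yH - WH + bH - \<gamma> * \<eta> bH)"
    proof (cases "a > 0")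
      case True
      have wHl: "WH \<le> wH" using l True by (simp add: WH_def)
      have mH: "min bH' WH \<in> {0..WH}" using bH' WH0 by auto
      have "-wH + bH' - \<gamma> * \<eta> bH' \<le> -WH + bH - \<gamma> * \<eta> bH"
        using key(1)[where \<eta>=\<eta>, OF smono gamma(1) WH0 wHl bH'] bH(2)[OF mH] by linarith
      then show ?thesis using True by (intro mult_left_mono) auto
    qed (use a0 in simp)
    have XL2: "(1 - a) * (P * yL - wL + bL' - \<gamma> * \<eta> bL') \<le> (1 - a) * (P * yL - WL + bL - \<gamma> * \<eta> bL)"
      using XL a1 by (intro mult_left_mono) auto
    have XL2s: "WL < wL \<longrightarrow> (1 - a) * (P * yL - wL + bL' - \<gamma> * \<eta> bL') < (1 - a) * (P * yL - WL + bL - \<gamma> * \<eta> bL)"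
      using XLs a1 by (auto intro: mult_strict_left_mono)
    show ?thesis using XH XL2 XL2s unfolding profit_def by linarith
  qed
  have opt: "optimal_at P yH yL \<gamma> \<eta> C u a WH WL bH bL"
    unfolding optimal_at_def using Fc bound by blast
  have eqn: "max 0 (u - a * dC a + C a) + dC a = max (dC a) (u + (1 - a) * dC a + C a)"
    by (simp add: max_def algebra_simps)
  have uniq: "wL = WL \<and> wH = WH" if ap: "0 < a" and o: "optimal_at P yH yL \<gamma> \<eta> C u a wH wL bH' bL'"
    for wH wL bH' bL'
  proof -
    have f: "feasible C u a wH wL bH' bL'" using o unfolding optimal_at_def by blast
    have ge: "profit P yH yL \<gamma> \<eta> a WH WL bH bL \<le> profit P yH yL \<gamma> \<eta> a wH wL bH' bL'"
      using o Fc unfolding optimal_at_def by blast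
    have l: "WL \<le> wL" "wH = wL + dC a" using lb[OF f] ap by auto
    have "\<not> WL < wL" using bound[OF f] ge by linarith
    then show ?thesis using l by (simp add: WH_def)
  qed
  show ?thesis
    using eqn opt uniq unfolding WH_def WL_def by blast
qed

end
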